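(* Let $f\colon\mathbb{R}^n\to\mathbb{R}$ be continuous and suppose there is $\gamma>0$ such that (i) the set $S_\gamma=\{z\in\mathbb{R}^n : f(z)\le\inf f+\gamma\}$ is compact, and (ii) every $x\in S_\gamma$ with $0\in\partial f(x)$ is a global minimizer of $f$. Let the MAD parameters $x^1\in\mathbb{R}^n$, $\alpha$, $t_1,\tau,T\in(0,\infty)$, $\eta_-\in(0,1)$, $\eta_+>1$, $\theta\in(0,1)$, $\delta>0$, $g^0\in\mathbb{R}^n$ satisfy $\alpha\in(1-\sqrt{\eta_-},1+\sqrt{\eta_-})$, and suppose there is a global minimizer $x^\star$ of $f$ with $t_1\ge\tau$ and $T\ge t_1\ge\|x^\star-x^1\|^2/(2\gamma)$. Let $\{x^k\},\{t_k\},\{\hat x^k\}$ be generated by MAD (described in the context). Then $\{u(x^k,t_k)\}$ is monotonically decreasing and convergent, and there is $\mu>0$ such that $$u(x^{k+1},t_{k+1})\le u(x^k,t_k)-\frac{\mu}{2}\|x^k-\hat x^k\|^2\quad\text{for all }k\in\mathbb{N}.$$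
   Context: For $t>0$, $\operatorname{prox}_{tf}(x)=\operatorname{argmin}_{z}\big(f(z)+\frac{1}{2t}\|z-x\|^2\big)$ and $u(x,t)=\inf_{z}\big(f(z)+\frac{1}{2t}\|z-x\|^2\big)$. The subdifferential $\partial f(\bar x)$ is the set of all $v$ with $f(x)\ge f(\bar x)+\langle v,x-\bar x\rangle+o(\|x-\bar x\|)$ as $x\to\bar x$. MAD: for $k=1,2,\dots$: choose $\hat x^k\in\operatorname{prox}_{t_kf}(x^k)$; set $g^k=(x^k-\hat x^k)/t_k$; set $x^{k+1}=x^k-\alpha t_kg^k$; set $t_{k+1}=\min(\eta_+t_k,T)$ if $\|g^k\|\le\theta\|g^{k-1}\|+\delta$, and $t_{k+1}=\max(\eta_-t_k,\tau)$ otherwise. *)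

theory Defs
  imports "HOL-Analysis.Analysis"
begin

definition frechet_subdiff :: "('a::real_inner \<Rightarrow> real) \<Rightarrow> 'a \<Rightarrow> 'a set" where
  "frechet_subdiff f xb = {v. \<forall>e>0. \<exists>d>0. \<forall>x. norm (x - xb) < d \<longrightarrow>
      f x \<ge> f xb + inner v (x - xb) - e * norm (x - xb)}"

definition prox :: "real \<Rightarrow> ('a::real_normed_vector \<Rightarrow> real) \<Rightarrow> 'a \<Rightarrow> 'a set" where
  "prox t f x = {z. \<forall>w. f z + (norm (z - x))^2 / (2 * t) \<le> f w + (norm (w - x))^2 / (2 * t)}"

definition moreau :: "('a::real_normed_vector \<Rightarrow> real) \<Rightarrow> 'a \<Rightarrow> real \<Rightarrow> real" where
  "moreau f x t = (INF z. f z + (norm (z - x))^2 / (2 * t))"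

end

theory Submission
  imports Defs
begin

lemma moreau_le:
  fixes f :: "'a::real_normed_vector \<Rightarrow> real"
  assumes "t > 0" "\<And>z. m \<le> f z"
  shows "moreau f x t \<le> f w + (norm (w - x))^2 / (2 * t)"
  unfolding moreau_def
proof (rule cINF_lower)
  show "bdd_below (range (\<lambda>z. f z + (norm (z - x))\<^sup>2 / (2 * t)))"
  proof (rule bdd_belowI2)
    fix z
    have "0 \<le> (norm (z - x))\<^sup>2 / (2 * t)" using assms(1) by simp
    then show "m \<le> f z + (norm (z - x))\<^sup>2 / (2 * t)" using assms(2)[of z] by linarith
  qed
qed simp

lemma moreau_ge:
  fixes f :: "'a::real_normed_vector \<Rightarrow> real"
  assumes "t > 0" "\<And>z. m \<le> f z"
  shows "m \<le> moreau f x t"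
  unfolding moreau_def
proof (rule cINF_greatest)
  fix z
  have "0 \<le> (norm (z - x))\<^sup>2 / (2 * t)" using assms(1) by simp
  then show "m \<le> f z + (norm (z - x))\<^sup>2 / (2 * t)" using assms(2)[of z] by linarith
qed simp

lemma moreau_eq:
  fixes f :: "'a::real_normed_vector \<Rightarrow> real"
  assumes "t > 0" "\<And>z. m \<le> f z" "z \<in> prox t f x"
  shows "moreau f x t = f z + (norm (z - x))^2 / (2 * t)"
proof (rule antisym)
  show "moreau f x t \<le> f z + (norm (z - x))^2 / (2 * t)" by (rule moreau_le[OF assms(1,2)])
  show "f z + (norm (z - x))^2 / (2 * t) \<le> moreau f x t"
    unfolding moreau_def using assms(3) unfolding prox_def by (intro cINF_greatest) auto
qed

theorem lemma8:
  fixes f :: "'a::euclidean_space \<Rightarrow> real"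
    and \<gamma> \<alpha> \<tau> T \<eta>m \<eta>p \<theta> \<delta> :: real
    and x xh g :: "nat \<Rightarrow> 'a"
    and t :: "nat \<Rightarrow> real"
    and xstar :: 'a
  assumes cont: "continuous_on UNIV f"
    and gamma_pos: "\<gamma> > 0"
    and compact_level: "compact {z. f z \<le> Inf (range f) + \<gamma>}"
    and stationary_min: "\<And>y. f y \<le> Inf (range f) + \<gamma> \<Longrightarrow> 0 \<in> frechet_subdiff f y \<Longrightarrow> (\<forall>z. f y \<le> f z)"
    and alpha_pos: "\<alpha> > 0"
    and t1_pos: "t 1 > 0" and tau_pos: "\<tau> > 0" and T_pos: "T > 0"
    and eta_m: "0 < \<eta>m" "\<eta>m < 1"
    and eta_p: "\<eta>p > 1"
    and theta: "0 < \<theta>" "\<theta> < 1"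
    and delta_pos: "\<delta> > 0"
    and alpha_range: "1 - sqrt \<eta>m < \<alpha>" "\<alpha> < 1 + sqrt \<eta>m"
    and xstar_min: "\<forall>z. f xstar \<le> f z"
    and t1_ge_tau: "t 1 \<ge> \<tau>"
    and T_ge_t1: "T \<ge> t 1"
    and t1_ge: "t 1 \<ge> (norm (xstar - x 1))^2 / (2 * \<gamma>)"
    and prox_step: "\<And>k. k \<ge> 1 \<Longrightarrow> xh k \<in> prox (t k) f (x k)"
    and g_def: "\<And>k. k \<ge> 1 \<Longrightarrow> g k = (1 / t k) *\<^sub>R (x k - xh k)"
    and x_step: "\<And>k. k \<ge> 1 \<Longrightarrow> x (Suc k) = x k - (\<alpha> * t k) *\<^sub>R g k"
    and t_step: "\<And>k. k \<ge> 1 \<Longrightarrow> t (Suc k) =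
        (if norm (g k) \<le> \<theta> * norm (g (k - 1)) + \<delta> then min (\<eta>p * t k) T
         else max (\<eta>m * t k) \<tau>)"
  shows "(\<forall>k\<ge>1. moreau f (x (Suc k)) (t (Suc k)) \<le> moreau f (x k) (t k))
    \<and> convergent (\<lambda>k. moreau f (x k) (t k))
    \<and> (\<exists>\<mu>>0. \<forall>k\<ge>1. moreau f (x (Suc k)) (t (Suc k))
                 \<le> moreau f (x k) (t k) - \<mu> / 2 * (norm (x k - xh k))^2)"
proof -
  have lb: "\<And>z. f xstar \<le> f z" using xstar_min by blast
  have tb: "\<tau> \<le> t k \<and> t k \<le> T" if "k \<ge> 1" for k
    using that
  proof (induction k rule: dec_induct)
    case base then show ?case using t1_ge_tau T_ge_t1 by simp
  next
    case (step k)
    have tk0: "t k > 0" using step tau_pos by linarith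
    have A: "\<eta>m * t k \<le> t k" using tk0 eta_m by simp
    have B: "t k \<le> \<eta>p * t k" using tk0 eta_p by simp
    show ?case using step t_step[of k] A B by (auto simp: min_def max_def)
  qed
  have tpos: "t k > 0" if "k \<ge> 1" for k using tb[OF that] tau_pos by linarith
  have tsuc: "\<eta>m * t k \<le> t (Suc k)" if "k \<ge> 1" for k
  proof -
    have "\<eta>m * t k \<le> t k" using tpos[OF that] eta_m by simp
    moreover have "\<eta>m * t k \<le> \<eta>p * t k" using tpos[OF that] eta_m eta_p by simp
    ultimately show ?thesis using t_step[OF that] tb[OF that] by (auto simp: min_def max_def)
  qed
  define c where "c = (1 - \<alpha>)^2 / \<eta>m"
  have sq: "(1 - \<alpha>)^2 < \<eta>m"
  proof -
    have "\<bar>1 - \<alpha>\<bar> < sqrt \<eta>m" using alpha_range by auto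
    hence "\<bar>1 - \<alpha>\<bar>^2 < (sqrt \<eta>m)^2" by (intro power_strict_mono) auto
    thus ?thesis using eta_m by simp
  qed
  have c01: "0 \<le> c" "c < 1" using sq eta_m by (auto simp: c_def)
  define \<mu> where "\<mu> = (1 - c) / T"
  have mupos: "\<mu> > 0" using c01 T_pos by (simp add: \<mu>_def)
  have key: "moreau f (x (Suc k)) (t (Suc k)) \<le> moreau f (x k) (t k) - \<mu> / 2 * (norm (x k - xh k))^2"
    if k: "k \<ge> 1" for k
  proof -
    define d where "d = x k - xh k"
    define D where "D = (norm d)^2"
    have D0: "D \<ge> 0" by (simp add: D_def)
    have tk: "t k > 0" "t k \<le> T" using tpos[OF k] tb[OF k] by auto
    have tk1: "t (Suc k) > 0" using tpos[of "Suc k"] k by simp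
    have xs: "x (Suc k) = x k - \<alpha> *\<^sub>R d"
      using x_step[OF k] g_def[OF k] tk by (simp add: d_def)
    have "xh k - x (Suc k) = (\<alpha> - 1) *\<^sub>R d" unfolding xs d_def by (simp add: algebra_simps)
    hence n2: "(norm (xh k - x (Suc k)))^2 = (1 - \<alpha>)^2 * D"
      by (simp add: D_def power_mult_distrib power2_commute)
    have u1: "moreau f (x (Suc k)) (t (Suc k)) \<le> f (xh k) + (1 - \<alpha>)^2 * D / (2 * t (Suc k))"
      using moreau_le[OF tk1 lb, where x="x (Suc k)" and w="xh k"] n2 by simp
    have u0: "moreau f (x k) (t k) = f (xh k) + D / (2 * t k)"
      using moreau_eq[OF tk(1) lb prox_step[OF k]] by (simp add: D_def d_def norm_minus_commute)
    have a: "(1 - \<alpha>)^2 * D / (2 * t (Suc k)) \<le> (1 - \<alpha>)^2 * D / (2 * (\<eta>m * t k))"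
      using tsuc[OF k] eta_m tk D0 tk1 by (intro divide_left_mono mult_nonneg_nonneg mult_pos_pos) auto
    have b: "(1 - \<alpha>)^2 * D / (2 * (\<eta>m * t k)) = c * D / (2 * t k)"
      using eta_m tk by (simp add: c_def field_simps)
    have e: "\<mu> / 2 * D \<le> (1 - c) * D / (2 * t k)"
    proof -
      have "(1 - c) / T \<le> (1 - c) / t k" using c01 tk by (intro divide_left_mono) auto
      hence "(1 - c) / T * D \<le> (1 - c) / t k * D" using D0 by (rule mult_right_mono)
      hence m: "(1 - c) / T * D / 2 \<le> (1 - c) / t k * D / 2" by (rule divide_right_mono) simp
      have e1: "\<mu> / 2 * D = (1 - c) / T * D / 2" by (simp add: \<mu>_def)
      have e2: "(1 - c) * D / (2 * t k) = (1 - c) / t k * D / 2" by simp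
      show ?thesis unfolding e1 e2 by (rule m)
    qed
    have "c * D / (2 * t k) = D / (2 * t k) - (1 - c) * D / (2 * t k)" using tk by (simp add: field_simps)
    then show ?thesis using u1 u0 a b e by (simp add: D_def d_def)
  qed
  have mono: "\<forall>k\<ge>1. moreau f (x (Suc k)) (t (Suc k)) \<le> moreau f (x k) (t k)"
  proof (intro allI impI)
    fix k :: nat assume k: "k \<ge> 1"
    have "0 \<le> \<mu> / 2 * (norm (x k - xh k))^2" using mupos by simp
    thus "moreau f (x (Suc k)) (t (Suc k)) \<le> moreau f (x k) (t k)" using key[OF k] by linarith
  qed
  have conv: "convergent (\<lambda>k. moreau f (x (Suc k)) (t (Suc k)))"
  proof (rule Bseq_monoseq_convergent)
    have dec: "decseq (\<lambda>k. moreau f (x (Suc k)) (t (Suc k)))"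
      by (rule decseq_SucI) (use mono in auto)
    show "Bseq (\<lambda>k. moreau f (x (Suc k)) (t (Suc k)))"
      by (rule decseq_bounded[OF dec, of "f xstar"]) (intro allI moreau_ge[where f=f and m="f xstar"] tpos lb; simp)
    show "monoseq (\<lambda>k. moreau f (x (Suc k)) (t (Suc k)))" using dec by (simp add: decseq_imp_monoseq)
  qed
  show ?thesis using mono conv key mupos convergent_Suc_iff by blast
qed

end
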